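(* Let $\mathcal{M}=(\mathbf{x},\mathbf{p})$ be an auction format satisfying voluntary participation, let $\boldsymbol{\pi}^{(1)},\dots,\boldsymbol{\pi}^{(n)}\in\Delta([K+1])$ be quantile strategies with $s_i:=s_{i,\boldsymbol{\pi}^{(i)}}$, and let $\tilde{\mathcal{M}}$ be the associated auxiliary auction. Let $\mathbf{e}:=(1,0,\dots,0)\in\mathbb{R}^{K+1}$. For $\mathbf{v}\sim\mathcal{D}$, set $\mathbf{b}_{-i}:=(s_\ell(v_\ell))_{\ell\neq i}$. Then \[ \sum_{i\in[n]}\mathbb{E}_{\mathbf{v}_{-i}}\Big[\mathbf{g}_i(\boldsymbol{\pi}^{(i)};\mathbf{b}_{-i})^{\top}\big(\mathbf{e}-\boldsymbol{\pi}^{(i)}\big)\Big]=\mathbb{E}_{\mathbf{v}\sim\mathcal{D}}\Big[\sum_{i\in[n]}p_i\big(s_1(v_1),\dots,s_n(v_n)\big)\Big]-\mathrm{Rev}_{\tilde{\mathcal{M}}}(\mathcal{D}). \]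
   Context: Each bidder $i\in[n]$ has value $v_i$ drawn independently from a continuous distribution $\mathcal{D}_i$ on $[0,1]$ with CDF $F_i$ and quantile function $F_i^{-1}(y):=\inf\{v\in[0,1]:F_i(v)\ge y\}$; $\mathcal{D}:=\mathcal{D}_1\times\cdots\times\mathcal{D}_n$. Bid set $B:=\{j/K:j=0,\dots,K\}$. An auction format is $(\mathbf{x},\mathbf{p})$, $\mathbf{x}:B^n\to\Delta([n])$ (nonnegative entries summing to at most 1), $\mathbf{p}:B^n\to[0,1]^n$; voluntary participation means $p_i(0,\mathbf{b}_{-i})=0$ for all $i$ and $\mathbf{b}_{-i}\in B^{n-1}$. For $\boldsymbol{\pi}\in\Delta([K+1])$ (probability simplex), $\Pi_0:=0$, $\Pi_j:=\sum_{\ell\le j}\pi_\ell$; $s_{i,\boldsymbol{\pi}}$ bids $0$ on $[0,F_i^{-1}(\Pi_1)]$ and $\frac{j-1}{K}$ on $(F_i^{-1}(\Pi_{j-1}),F_i^{-1}(\Pi_j)]$ for $j=2,\dots,K+1$. For $\mathbf{b}_{-i}\in B^{n-1}$, the vector $\mathbf{g}_i(\boldsymbol{\pi};\mathbf{b}_{-i})\in\mathbb{R}^{K+1}$ (the gradient of bidder $i$'s quantile utility) has entries \[ g_{i,k}(\boldsymbol{\pi};\mathbf{b}_{-i}):=\sum_{j=k}^{K}\Big(x_i\big(\tfrac{j-1}{K},\mathbf{b}_{-i}\big)-x_i\big(\tfrac{j}{K},\mathbf{b}_{-i}\big)\Big)F_i^{-1}(\Pi_j)+x_i(1,\mathbf{b}_{-i})-p_i\big(\tfrac{k-1}{K},\mathbf{b}_{-i}\big),\quad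 k\in[K+1]. \] The auxiliary auction $\tilde{\mathcal{M}}=(\tilde{\mathbf{x}},\tilde{\mathbf{p}})$ on $[0,1]^n$: $\tilde{\mathbf{x}}(\mathbf{v}):=\mathbf{x}(s_1(v_1),\dots,s_n(v_n))$, $\tilde p_i(\mathbf{v}):=\tilde x_i(v_i,\mathbf{v}_{-i})v_i-\int_0^{v_i}\tilde x_i(z,\mathbf{v}_{-i})dz$; $\mathrm{Rev}_{\tilde{\mathcal{M}}}(\mathcal{D}):=\mathbb{E}_{\mathbf{v}\sim\mathcal{D}}[\sum_i\tilde p_i(\mathbf{v})]$. *)

theory Defs
  imports "HOL-Probability.Probability"
begin

(* Bidders are indexed by {..<n} (0-based); quantile-strategy coordinates
   are indexed by {1..K+1} as in the paper. Bids are real numbers j/K. *)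

definition bidset :: "nat \<Rightarrow> real set" where
  "bidset K = {real j / real K | j. j \<le> K}"

definition bid_profiles :: "nat \<Rightarrow> nat \<Rightarrow> (nat \<Rightarrow> real) set" where
  "bid_profiles n K = {b. (\<forall>i<n. b i \<in> bidset K) \<and> (\<forall>i. n \<le> i \<longrightarrow> b i = 0)}"

definition auction_format ::
  "nat \<Rightarrow> nat \<Rightarrow> (nat \<Rightarrow> (nat \<Rightarrow> real) \<Rightarrow> real) \<Rightarrow> (nat \<Rightarrow> (nat \<Rightarrow> real) \<Rightarrow> real) \<Rightarrow> bool" where
  "auction_format n K x p \<longleftrightarrow>
     (\<forall>b\<in>bid_profiles n K. (\<forall>i<n. 0 \<le> x i b) \<and> (\<Sum>i<n. x i b) \<le> 1 \<and>
                           (\<forall>i<n. 0 \<le> p i b \<and> p i b \<le> 1))"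

definition voluntary_participation ::
  "nat \<Rightarrow> nat \<Rightarrow> (nat \<Rightarrow> (nat \<Rightarrow> real) \<Rightarrow> real) \<Rightarrow> bool" where
  "voluntary_participation n K p \<longleftrightarrow> (\<forall>i<n. \<forall>b\<in>bid_profiles n K. p i (b(i := 0)) = 0)"

definition value_distribution :: "real measure \<Rightarrow> bool" where
  "value_distribution M \<longleftrightarrow> prob_space M \<and> sets M = sets borel \<and>
     measure M {0..1} = 1 \<and> (\<forall>v. isCont (cdf M) v)"

definition quantile :: "real measure \<Rightarrow> real \<Rightarrow> real" where
  "quantile M y = Inf {v \<in> {0..1}. y \<le> cdf M v}"

definition prob_simplex :: "nat \<Rightarrow> (nat \<Rightarrow> real) \<Rightarrow> bool" where
  "prob_simplex K \<pi> \<longleftrightarrow> (\<forall>k\<in>{1..K+1}. 0 \<le> \<pi> k) \<and> (\<Sum>k=1..K+1. \<pi> k) = 1"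

definition cum :: "(nat \<Rightarrow> real) \<Rightarrow> nat \<Rightarrow> real" where
  "cum \<pi> j = (\<Sum>l=1..j. \<pi> l)"

definition quantile_strategy :: "nat \<Rightarrow> real measure \<Rightarrow> (nat \<Rightarrow> real) \<Rightarrow> real \<Rightarrow> real" where
  "quantile_strategy K M \<pi> v =
     (if v \<le> quantile M (cum \<pi> 1) then 0
      else (\<Sum>j=2..K+1. if quantile M (cum \<pi> (j - 1)) < v \<and> v \<le> quantile M (cum \<pi> j)
                         then real (j - 1) / real K else 0))"

(* g_{i,k}(pi; b_{-i}); the i-th entry of b is irrelevant (overwritten) *)
definition grad ::
  "nat \<Rightarrow> (nat \<Rightarrow> (nat \<Rightarrow> real) \<Rightarrow> real) \<Rightarrow> (nat \<Rightarrow> (nat \<Rightarrow> real) \<Rightarrow> real) \<Rightarrow> real measure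
   \<Rightarrow> (nat \<Rightarrow> real) \<Rightarrow> nat \<Rightarrow> (nat \<Rightarrow> real) \<Rightarrow> nat \<Rightarrow> real" where
  "grad K x p M \<pi> i b k =
     (\<Sum>j=k..K. (x i (b(i := real (j - 1) / real K)) - x i (b(i := real j / real K)))
                 * quantile M (cum \<pi> j))
     + x i (b(i := 1)) - p i (b(i := real (k - 1) / real K))"

definition bid_profile_of ::
  "nat \<Rightarrow> (nat \<Rightarrow> real \<Rightarrow> real) \<Rightarrow> (nat \<Rightarrow> real) \<Rightarrow> nat \<Rightarrow> real" where
  "bid_profile_of n s v = (\<lambda>l. if l < n then s l (v l) else 0)"

definition aux_alloc ::
  "nat \<Rightarrow> (nat \<Rightarrow> (nat \<Rightarrow> real) \<Rightarrow> real) \<Rightarrow> (nat \<Rightarrow> real \<Rightarrow> real) \<Rightarrow> nat \<Rightarrow> (nat \<Rightarrow> real) \<Rightarrow> real" where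
  "aux_alloc n x s i v = x i (bid_profile_of n s v)"

definition aux_pay ::
  "nat \<Rightarrow> (nat \<Rightarrow> (nat \<Rightarrow> real) \<Rightarrow> real) \<Rightarrow> (nat \<Rightarrow> real \<Rightarrow> real) \<Rightarrow> nat \<Rightarrow> (nat \<Rightarrow> real) \<Rightarrow> real" where
  "aux_pay n x s i v = aux_alloc n x s i v * v i - (LBINT z=0..v i. aux_alloc n x s i (v(i := z)))"

definition aux_revenue ::
  "nat \<Rightarrow> (nat \<Rightarrow> (nat \<Rightarrow> real) \<Rightarrow> real) \<Rightarrow> (nat \<Rightarrow> real \<Rightarrow> real) \<Rightarrow> (nat \<Rightarrow> real measure) \<Rightarrow> real" where
  "aux_revenue n x s D = (\<integral>v. (\<Sum>i<n. aux_pay n x s i v) \<partial>(PiM {..<n} D))"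

end

theory Submission
  imports Defs
begin

lemma vd_real_distribution: "value_distribution M \<Longrightarrow> real_distribution M"
  unfolding value_distribution_def real_distribution_def real_distribution_axioms_def by auto

lemma vd_cdf1: assumes "value_distribution M" shows "cdf M 1 = 1"
proof -
  interpret real_distribution M using vd_real_distribution[OF assms] .
  have "measure M {0..1} \<le> cdf M 1" unfolding cdf_def by (intro finite_measure_mono) auto
  then show ?thesis using assms cdf_bounded_prob[of 1] unfolding value_distribution_def by auto
qed

lemma vd_cdf0: assumes "value_distribution M" shows "cdf M 0 = 0"
proof -
  interpret real_distribution M using vd_real_distribution[OF assms] .
  have c: "measure M {0} = 0" using assms isCont_cdf unfolding value_distribution_def by auto
  have "measure M ({..<0} \<union> {0..1}) = measure M {..<0} + measure M {0..1}"
    by (intro finite_measure_Union) auto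
  moreover have "measure M ({..<0} \<union> {0..1}) \<le> 1" by simp
  ultimately have a: "measure M {..<0} = 0" using assms measure_nonneg[of M "{..<0}"]
    unfolding value_distribution_def by auto
  have "cdf M 0 = measure M ({..<0} \<union> {0})" unfolding cdf_def by (metis ivl_disj_un_singleton(2))
  also have "\<dots> = 0" by (subst finite_measure_Union) (auto simp: a c)
  finally show ?thesis .
qed

lemma quantile_props:
  assumes vd: "value_distribution M" and y: "0 \<le> y" "y \<le> 1"
  shows "0 \<le> quantile M y" "quantile M y \<le> 1" "cdf M (quantile M y) = y"
proof -
  interpret real_distribution M using vd_real_distribution[OF vd] .
  have cont: "\<And>v. isCont (cdf M) v" using vd unfolding value_distribution_def by auto
  obtain w where w: "0 \<le> w" "w \<le> 1" "cdf M w = y"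
    using IVT[of "cdf M" 0 y 1] vd_cdf0[OF vd] vd_cdf1[OF vd] y cont by auto
  define S where "S = {v \<in> {0..1}. y \<le> cdf M v}"
  have wS: "w \<in> S" using w by (auto simp: S_def)
  have bdd: "bdd_below S" unfolding S_def by (rule bdd_belowI[of _ 0]) auto
  have cl: "closed S"
  proof -
    have "closed {v. y \<le> cdf M v}"
      by (rule closed_Collect_le) (auto intro!: continuous_at_imp_continuous_on cont)
    then have "closed ({0..1} \<inter> {v. y \<le> cdf M v})" by auto
    moreover have "S = {0..1} \<inter> {v. y \<le> cdf M v}" by (auto simp: S_def)
    ultimately show ?thesis by simp
  qed
  have q: "quantile M y = Inf S" by (simp add: quantile_def S_def)
  have inS: "Inf S \<in> S" using closed_contains_Inf[OF _ bdd cl] wS by auto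
  have le: "Inf S \<le> w" using cInf_lower[OF wS bdd] .
  show "0 \<le> quantile M y" using inS q by (auto simp: S_def)
  show "quantile M y \<le> 1" using le w q by auto
  have "cdf M (Inf S) \<le> y" using cdf_nondecreasing[OF le] w by auto
  moreover have "y \<le> cdf M (Inf S)" using inS by (auto simp: S_def)
  ultimately show "cdf M (quantile M y) = y" using q by auto
qed

lemma quantile_mono:
  assumes vd: "value_distribution M" and y: "0 \<le> y" "y \<le> y'" "y' \<le> 1"
  shows "quantile M y \<le> quantile M y'"
proof -
  have ne: "{v \<in> {0..1}. y' \<le> cdf M v} \<noteq> {}" using vd_cdf1[OF vd] y by auto
  have bdd: "bdd_below {v \<in> {0..1}. y \<le> cdf M v}" by (rule bdd_belowI[of _ 0]) auto
  show ?thesis unfolding quantile_def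
    by (rule cInf_superset_mono[OF ne bdd]) (use y in auto)
qed

lemma tele1: "(\<Sum>j::nat=1..m. f j - f (j - 1)) = f m - (f 0 :: 'a::ab_group_add)"
  by (induction m) auto

lemma tele2: "(m::nat) \<le> N \<Longrightarrow> (\<Sum>j=1..N. (f j - f (j - 1)) * (if j \<le> m then 1 else 0)) = f m - (f 0 :: real)"
proof (induction N)
  case 0 then show ?case by simp
next
  case (Suc N)
  show ?case
  proof (cases "m \<le> N")
    case True then show ?thesis using Suc by simp
  next
    case False
    then have m: "m = Suc N" using Suc by simp
    have "(\<Sum>j=1..Suc N. (f j - f (j - 1)) * (if j \<le> m then 1 else 0)) = (\<Sum>j=1..m. f j - f (j - 1))"
      using m by (intro sum.cong) auto
    then show ?thesis using tele1 by simp
  qed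
qed

lemma cum_mono:
  assumes "prob_simplex K \<pi>" "j \<le> j'" "j' \<le> K + 1"
  shows "cum \<pi> j \<le> cum \<pi> j'"
proof -
  have "cum \<pi> j' = cum \<pi> j + (\<Sum>l\<in>{j<..j'}. \<pi> l)"
    unfolding cum_def using assms(2) by (subst sum.union_disjoint[symmetric]) (auto intro!: sum.cong)
  moreover have "0 \<le> (\<Sum>l\<in>{j<..j'}. \<pi> l)" using assms unfolding prob_simplex_def
    by (intro sum_nonneg) auto
  ultimately show ?thesis by simp
qed

lemma cum_top: "prob_simplex K \<pi> \<Longrightarrow> cum \<pi> (K+1) = 1"
  unfolding prob_simplex_def cum_def by simp

lemma cum_bounds:
  assumes "prob_simplex K \<pi>" "j \<le> K + 1"
  shows "0 \<le> cum \<pi> j" "cum \<pi> j \<le> 1"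
  using cum_mono[OF assms(1), of 0 j] cum_mono[OF assms(1), of j "K+1"] assms(2) cum_top[OF assms(1)]
  by (auto simp: cum_def)

lemma q_props:
  assumes vd: "value_distribution M" and ps: "prob_simplex K \<pi>" and j: "j \<le> K + 1"
  shows "0 \<le> quantile M (cum \<pi> j)" "quantile M (cum \<pi> j) \<le> 1"
    "cdf M (quantile M (cum \<pi> j)) = cum \<pi> j"
  using quantile_props[OF vd cum_bounds[OF ps j]] by auto

lemma q_mono:
  assumes vd: "value_distribution M" and ps: "prob_simplex K \<pi>" and j: "j \<le> j'" "j' \<le> K + 1"
  shows "quantile M (cum \<pi> j) \<le> quantile M (cum \<pi> j')"
  using quantile_mono[OF vd cum_bounds(1)[OF ps] cum_mono[OF ps j] cum_bounds(2)[OF ps j(2)]] j by auto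

lemma step_abstract:
  fixes q :: "nat \<Rightarrow> real" and h :: "real \<Rightarrow> 'a::ab_group_add"
  assumes mono: "\<And>j j'. 1 \<le> j \<Longrightarrow> j \<le> j' \<Longrightarrow> j' \<le> K + 1 \<Longrightarrow> q j \<le> q j'" and K: "0 < K"
  defines "hh \<equiv> (\<lambda>j. if j = K + 1 then h 0 else h (real j / real K))"
  shows "h (if z \<le> q 1 then 0 else (\<Sum>j=2..K+1. if q (j - 1) < z \<and> z \<le> q j then real (j - 1) / real K else 0))
       = h 0 + (\<Sum>j=1..K+1. if q j < z then hh j - hh (j - 1) else 0)"
proof -
  consider "z \<le> q 1" | "q (K+1) < z" | "q 1 < z" "z \<le> q (K+1)" by linarith
  then show ?thesis
  proof cases
    case 1
    have "\<And>j. j \<in> {1..K+1} \<Longrightarrow> \<not> q j < z"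
    proof -
      fix j assume "j \<in> {1..K+1}" then have "q 1 \<le> q j" using mono[of 1 j] by auto
      then show "\<not> q j < z" using 1 by auto
    qed
    then show ?thesis using 1 by simp
  next
    case 2
    have b: "\<And>j. j \<in> {1..K+1} \<Longrightarrow> q j < z"
    proof -
      fix j assume "j \<in> {1..K+1}" then have "q j \<le> q (K+1)" using mono[of j "K+1"] by auto
      then show "q j < z" using 2 by auto
    qed
    have a: "\<And>j. j \<in> {2..K+1} \<Longrightarrow> \<not> z \<le> q j"
    proof -
      fix j :: nat assume "j \<in> {2..K+1}" then have "j \<in> {1..K+1}" by auto
      then show "\<not> z \<le> q j" using b by force
    qed
    have "\<not> z \<le> q 1" using b[of 1] by auto
    then have "(if z \<le> q 1 then 0 else (\<Sum>j=2..K+1. if q (j - 1) < z \<and> z \<le> q j then real (j - 1) / real K else 0)) = 0"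
      using a by simp
    moreover have "(\<Sum>j=1..K+1. if q j < z then hh j - hh (j - 1) else 0) = (\<Sum>j=1..K+1. hh j - hh (j - 1))"
      using b by (intro sum.cong) auto
    moreover have "(\<Sum>j=1..K+1. hh j - hh (j - 1)) = hh (K+1) - hh 0"
      by (rule tele1)
    ultimately show ?thesis by (simp add: hh_def)
  next
    case 3
    define L where "L = (LEAST j. 1 \<le> j \<and> z \<le> q j)"
    have ex: "1 \<le> K+1 \<and> z \<le> q (K+1)" using 3 by simp
    have L1: "1 \<le> L" "z \<le> q L" using LeastI[of "\<lambda>j. 1 \<le> j \<and> z \<le> q j", OF ex] by (auto simp: L_def)
    have L2: "L \<le> K+1" using Least_le[of "\<lambda>j. 1 \<le> j \<and> z \<le> q j", OF ex] by (auto simp: L_def)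
    have L3: "\<And>j. 1 \<le> j \<Longrightarrow> j < L \<Longrightarrow> q j < z"
    proof -
      fix j :: nat assume j: "1 \<le> j" "j < L"
      have "\<not> (1 \<le> j \<and> z \<le> q j)" using j(2) unfolding L_def by (rule not_less_Least)
      then show "q j < z" using j by auto
    qed
    have L4: "\<And>j. L \<le> j \<Longrightarrow> j \<le> K+1 \<Longrightarrow> \<not> q j < z"
    proof -
      fix j assume "L \<le> j" "j \<le> K+1" then have "q L \<le> q j" using mono[of L j] L1 by auto
      then show "\<not> q j < z" using L1 by auto
    qed
    have L5: "L \<noteq> 1" using L1 3 by auto
    have sz: "(\<Sum>j=2..K+1. if q (j - 1) < z \<and> z \<le> q j then real (j - 1) / real K else 0)
        = (\<Sum>j=2..K+1. if j = L then real (L - 1) / real K else 0)"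
    proof (intro sum.cong refl)
      fix j assume j: "j \<in> {2..K+1}"
      show "(if q (j - 1) < z \<and> z \<le> q j then real (j - 1) / real K else 0) = (if j = L then real (L - 1) / real K else 0)"
      proof (cases "j = L")
        case True then show ?thesis using L1 L3[of "j-1"] j by auto
      next
        case False
        show ?thesis
        proof (cases "j < L")
          case True then show ?thesis using L3[of j] j by auto
        next
          case f2: False
          then have "L \<le> j - 1" using False by auto
          moreover have "j - 1 \<le> K + 1" using j by auto
          ultimately have "\<not> q (j-1) < z" using L4[of "j-1"] by blast
          then show ?thesis using False by auto
        qed
      qed
    qed
    have "(\<Sum>j=2..K+1. if j = L then real (L - 1) / real K else 0) = real (L - 1) / real K"
      using L1 L2 L5 by (subst sum.delta) auto
    with sz have s: "(if z \<le> q 1 then 0 else (\<Sum>j=2..K+1. if q (j - 1) < z \<and> z \<le> q j then real (j - 1) / real K else 0))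
       = real (L - 1) / real K" using 3 by simp
    have sumeq: "(\<Sum>j=1..K+1. if q j < z then hh j - hh (j - 1) else 0) = (\<Sum>j=1..K+1. if j \<le> L - 1 then hh j - hh (j - 1) else 0)"
    proof (intro sum.cong refl)
      fix j assume j: "j \<in> {1..K+1}"
      have "q j < z \<longleftrightarrow> j \<le> L - 1"
      proof (cases "j < L")
        case True then show ?thesis using L3[of j] j by auto
      next
        case False then show ?thesis using L4[of j] j by auto
      qed
      then show "(if q j < z then hh j - hh (j - 1) else 0) = (if j \<le> L - 1 then hh j - hh (j - 1) else 0)" by simp
    qed
    also have "\<dots> = hh (L - 1) - hh 0"
    proof -
      have gen: "\<And>m N. m \<le> N \<Longrightarrow> (\<Sum>j=1..N. if j \<le> m then hh j - hh (j - 1) else 0) = hh m - hh 0"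
      proof -
        fix m N :: nat assume "m \<le> N" then show "(\<Sum>j=1..N. if j \<le> m then hh j - hh (j - 1) else 0) = hh m - hh 0"
        proof (induction N)
          case 0 then show ?case by simp
        next
          case (Suc N)
          show ?case
          proof (cases "m \<le> N")
            case True then show ?thesis using Suc by simp
          next
            case False
            then have m: "m = Suc N" using Suc by simp
            have "(\<Sum>j=1..Suc N. if j \<le> m then hh j - hh (j - 1) else 0) = (\<Sum>j=1..m. hh j - hh (j - 1))"
              using m by (intro sum.cong) auto
            also have "\<dots> = hh m - hh 0" by (rule tele1)
            finally show ?thesis .
          qed
        qed
      qed
      show ?thesis by (rule gen) (use L2 in linarith)
    qed
    finally have sumeq2: "(\<Sum>j=1..K+1. if q j < z then hh j - hh (j - 1) else 0) = hh (L - 1) - hh 0" .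
    have "L - 1 \<noteq> K + 1" using L2 L1 by linarith
    then have hhL: "hh (L-1) = h (real (L-1) / real K)" by (simp add: hh_def)
    have hh0: "hh 0 = h 0" by (simp add: hh_def)
    show ?thesis unfolding s sumeq2 hhL hh0 by simp
  qed
qed

lemma step_repr:
  fixes h :: "real \<Rightarrow> 'a::ab_group_add"
  assumes vd: "value_distribution M" and ps: "prob_simplex K \<pi>" and K: "0 < K"
  shows "h (quantile_strategy K M \<pi> z) = h 0 + (\<Sum>j=1..K+1. if quantile M (cum \<pi> j) < z then
     (if j = K + 1 then h 0 else h (real j / real K)) - (if j - 1 = K + 1 then h 0 else h (real (j - 1) / real K)) else 0)"
  unfolding quantile_strategy_def
  by (rule step_abstract[where q="\<lambda>j. quantile M (cum \<pi> j)" and h=h, OF q_mono[OF vd ps] K])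

lemma qs_bidset:
  assumes vd: "value_distribution M" and ps: "prob_simplex K \<pi>" and K: "0 < K"
  shows "quantile_strategy K M \<pi> z \<in> bidset K"
proof -
  define h where "h = (\<lambda>t. if t \<in> bidset K then 0 else (1::real))"
  have b: "\<And>j. j \<le> K \<Longrightarrow> real j / real K \<in> bidset K" unfolding bidset_def by auto
  have b0: "0 \<in> bidset K" using b[of 0] by simp
  have "h (quantile_strategy K M \<pi> z) = h 0 + (\<Sum>j=1..K+1. if quantile M (cum \<pi> j) < z then
     (if j = K + 1 then h 0 else h (real j / real K)) - (if j - 1 = K + 1 then h 0 else h (real (j - 1) / real K)) else 0)"
    by (rule step_repr[OF vd ps K])
  also have "\<dots> = 0"
  proof -
    have "\<And>j. j \<in> {1..K+1} \<Longrightarrow> (if quantile M (cum \<pi> j) < z then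
     (if j = K + 1 then h 0 else h (real j / real K)) - (if j - 1 = K + 1 then h 0 else h (real (j - 1) / real K)) else 0) = 0"
    proof -
      fix j assume j: "j \<in> {1..K+1}"
      have e1: "(if j = K + 1 then h 0 else h (real j / real K)) = 0" using b[of j] j b0 by (auto simp: h_def)
      have "real (j - 1) / real K \<in> bidset K" using b[of "j-1"] j by auto
      then have e2: "(if j - 1 = K + 1 then h 0 else h (real (j - 1) / real K)) = 0" using b0 by (auto simp: h_def)
      show "(if quantile M (cum \<pi> j) < z then
     (if j = K + 1 then h 0 else h (real j / real K)) - (if j - 1 = K + 1 then h 0 else h (real (j - 1) / real K)) else 0) = 0"
        unfolding e1 e2 by simp
    qed
    then show ?thesis using b0 by (simp add: h_def)
  qed
  finally show ?thesis by (simp add: h_def split: if_splits)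
qed

lemma qs_measurable: "quantile_strategy K M \<pi> \<in> borel_measurable borel"
  unfolding quantile_strategy_def by measurable

lemma alg_a: "(\<Sum>k=1..K+1. \<pi> k * (\<Sum>j=k..K. a j)) = (\<Sum>j=1..K. a j * cum \<pi> j)"
proof (induction K)
  case 0 then show ?case by simp
next
  case (Suc K)
  have "(\<Sum>k=1..Suc K+1. \<pi> k * (\<Sum>j=k..Suc K. a j)) = (\<Sum>k=1..K+1. \<pi> k * (\<Sum>j=k..Suc K. a j))"
    by simp
  also have "\<dots> = (\<Sum>k=1..K+1. \<pi> k * (\<Sum>j=k..K. a j) + \<pi> k * a (Suc K))"
    by (intro sum.cong refl) (auto simp: distrib_left)
  also have "\<dots> = (\<Sum>j=1..K. a j * cum \<pi> j) + a (Suc K) * cum \<pi> (Suc K)"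
    by (simp only: sum.distrib Suc.IH flip: sum_distrib_right) (simp add: cum_def mult.commute)
  finally show ?case by simp
qed

lemma alg_b: "(\<Sum>j=1..K. (P j - P (j - 1)) * (cum \<pi> (K+1) - cum \<pi> j)) = (\<Sum>k=1..K+1. \<pi> k * P (k - 1)) - cum \<pi> (K+1) * P 0"
proof (induction K)
  case 0 then show ?case by (simp add: cum_def)
next
  case (Suc K)
  have "(\<Sum>j=1..Suc K. (P j - P (j - 1)) * (cum \<pi> (Suc K+1) - cum \<pi> j))
      = (\<Sum>j=1..Suc K. (P j - P (j - 1)) * (cum \<pi> (K+1) - cum \<pi> j) + (P j - P (j - 1)) * \<pi> (K+2))"
    by (intro sum.cong refl) (auto simp: cum_def algebra_simps)
  also have "\<dots> = (\<Sum>j=1..K. (P j - P (j - 1)) * (cum \<pi> (K+1) - cum \<pi> j)) + (P (Suc K) - P 0) * \<pi> (K+2)"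
    using tele1[of P K] by (simp add: sum.distrib cum_def flip: sum_distrib_right)
  also have "\<dots> = (\<Sum>k=1..Suc K+1. \<pi> k * P (k - 1)) - cum \<pi> (Suc K+1) * P 0"
    by (subst Suc.IH) (simp add: cum_def algebra_simps)
  finally show ?case .
qed

lemma alg:
  fixes hX hP :: "real \<Rightarrow> real" and Q \<pi> :: "nat \<Rightarrow> real"
  assumes c1: "cum \<pi> (K+1) = 1" and p0: "hP 0 = 0"
  shows "(\<Sum>k=1..K+1. ((\<Sum>j=k..K. (hX (real (j-1)/real K) - hX (real j/real K)) * Q j) + hX 1 - hP (real (k-1)/real K)) * ((if k = 1 then 1 else 0) - \<pi> k))
  = (\<Sum>j=1..K+1. (((if j = K+1 then hP 0 else hP (real j/real K)) - (if j-1 = K+1 then hP 0 else hP (real (j-1)/real K)))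
        - ((if j = K+1 then hX 0 else hX (real j/real K)) - (if j-1 = K+1 then hX 0 else hX (real (j-1)/real K))) * Q j) * (1 - cum \<pi> j))"
    (is "?L = ?R")
proof -
  define P where "P = (\<lambda>n::nat. hP (real n / real K))"
  define X where "X = (\<lambda>n::nat. hX (real n / real K))"
  define a where "a = (\<lambda>j. (X (j-1) - X j) * Q j)"
  have P0: "P 0 = 0" using p0 by (simp add: P_def)
  have R: "?R = (\<Sum>j=1..K. ((P j - P (j-1)) - (X j - X (j-1)) * Q j) * (1 - cum \<pi> j))"
  proof -
    have "?R = (\<Sum>j=1..K. (((if j = K+1 then hP 0 else hP (real j/real K)) - (if j-1 = K+1 then hP 0 else hP (real (j-1)/real K)))
        - ((if j = K+1 then hX 0 else hX (real j/real K)) - (if j-1 = K+1 then hX 0 else hX (real (j-1)/real K))) * Q j) * (1 - cum \<pi> j))"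
      using c1 by simp
    also have "\<dots> = (\<Sum>j=1..K. ((P j - P (j-1)) - (X j - X (j-1)) * Q j) * (1 - cum \<pi> j))"
      by (intro sum.cong refl) (auto simp: P_def X_def)
    finally show ?thesis .
  qed
  have eA: "(\<Sum>k=1..K+1. ((\<Sum>j=k..K. a j) + hX 1 - P (k-1)) * (if k = 1 then 1 else 0)) = (\<Sum>j=1..K. a j) + hX 1 - P 0"
    by (simp add: if_distrib[of "\<lambda>z. _ * z"] sum.delta cong: if_cong)
  have eB: "(\<Sum>k=1..K+1. ((\<Sum>j=k..K. a j) + hX 1 - P (k-1)) * \<pi> k)
     = (\<Sum>k=1..K+1. \<pi> k * (\<Sum>j=k..K. a j)) + hX 1 * (\<Sum>k=1..K+1. \<pi> k) - (\<Sum>k=1..K+1. \<pi> k * P (k-1))"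
    by (simp add: algebra_simps sum_subtractf sum.distrib sum_distrib_left)
  have ePi: "(\<Sum>k=1..K+1. \<pi> k) = 1" using c1 by (simp add: cum_def)
  have L: "?L = (\<Sum>k=1..K+1. ((\<Sum>j=k..K. a j) + hX 1 - P (k-1)) * ((if k = 1 then 1 else 0) - \<pi> k))"
    by (simp add: a_def P_def X_def)
  also have "\<dots> = (\<Sum>k=1..K+1. ((\<Sum>j=k..K. a j) + hX 1 - P (k-1)) * (if k = 1 then 1 else 0))
      - (\<Sum>k=1..K+1. ((\<Sum>j=k..K. a j) + hX 1 - P (k-1)) * \<pi> k)"
    by (simp add: right_diff_distrib sum_subtractf)
  also have "\<dots> = (\<Sum>j=1..K. a j) + hX 1 - (\<Sum>j=1..K. a j * cum \<pi> j) - hX 1 + (\<Sum>k=1..K+1. \<pi> k * P (k-1))"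
    unfolding eA eB alg_a ePi using P0 by simp
  also have "\<dots> = (\<Sum>j=1..K. a j * (1 - cum \<pi> j)) + (\<Sum>j=1..K. (P j - P (j - 1)) * (1 - cum \<pi> j))"
    using alg_b[where P=P and K=K and \<pi>=\<pi>] c1 P0 by (simp add: algebra_simps sum_subtractf sum_distrib_left)
  also have "\<dots> = ?R" unfolding R a_def
    by (simp add: sum.distrib[symmetric] algebra_simps)
  finally show ?thesis .
qed

lemma meas_Ioc_max: "measure lborel {q<..t::real} = max 0 (t - q)"
  by (cases "q \<le> t") auto

lemma emeasure_Ioc_fin: "emeasure lborel {q<..t::real} < top"
proof -
  have "emeasure lborel {q<..t} \<le> emeasure lborel {q..t}" by (intro emeasure_mono) auto
  also have "\<dots> < top" by (simp add: emeasure_lborel_Icc_eq)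
  finally show ?thesis .
qed

lemma int_Ioc: "integrable lborel (indicat_real {q<..t::real})"
  by (rule integrable_real_indicator) (auto simp: emeasure_Ioc_fin)

lemma int_Icc: "integrable lborel (indicat_real {q..t::real})"
  by (rule integrable_real_indicator) (auto simp: emeasure_lborel_Icc_eq)

lemma lbint_step:
  fixes c :: real and d q :: "nat \<Rightarrow> real"
  assumes A: "finite A" and q: "\<And>j. j \<in> A \<Longrightarrow> 0 \<le> q j"
  shows "(LBINT z=0..t. c + (\<Sum>j\<in>A. if q j < z then d j else 0)) = c * t + (\<Sum>j\<in>A. d j * max 0 (t - q j))"
proof (cases "0 \<le> t")
  case True
  have "(LBINT z=0..t. c + (\<Sum>j\<in>A. if q j < z then d j else 0)) = (LBINT z:{0..t}. c + (\<Sum>j\<in>A. if q j < z then d j else 0))"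
    using interval_integral_Icc[of 0 t] True by (simp add: zero_ereal_def)
  also have "\<dots> = (\<integral>z. c * indicator {0..t} z + (\<Sum>j\<in>A. d j * indicator {q j<..t} z) \<partial>lborel)"
  proof -
    have pw: "indicator {0..t} z *\<^sub>R (c + (\<Sum>j\<in>A. if q j < z then d j else 0)) = c * indicator {0..t} z + (\<Sum>j\<in>A. d j * indicator {q j<..t} z)" for z
    proof (cases "z \<in> {0..t}")
      case True then show ?thesis by (auto simp: indicator_def intro!: sum.cong)
    next
      case False
      have "\<And>j. j \<in> A \<Longrightarrow> z \<notin> {q j<..t}" using False q by force
      then have ij: "\<And>j. j \<in> A \<Longrightarrow> indicator {q j<..t} z = (0::real)" by simp
      have i0: "indicator {0..t} z = (0::real)" using False by simp
      show ?thesis by (simp add: i0 ij)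
    qed
    show ?thesis unfolding set_lebesgue_integral_def pw by (rule refl)
  qed
  also have "\<dots> = c * t + (\<Sum>j\<in>A. d j * max 0 (t - q j))"
  proof -
    have "(\<integral>z. c * indicator {0..t} z + (\<Sum>j\<in>A. d j * indicator {q j<..t} z) \<partial>lborel)
       = (\<integral>z. c * indicator {0..t} z \<partial>lborel) + (\<integral>z. (\<Sum>j\<in>A. d j * indicator {q j<..t} z) \<partial>lborel)"
      by (rule Bochner_Integration.integral_add) (auto intro!: integrable_mult_right integrable_sum int_Ioc int_Icc)
    also have "(\<integral>z. (\<Sum>j\<in>A. d j * indicator {q j<..t} z) \<partial>lborel) = (\<Sum>j\<in>A. (\<integral>z. d j * indicator {q j<..t} z \<partial>lborel))"
      by (intro Bochner_Integration.integral_sum integrable_mult_right int_Ioc)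
    also have "\<dots> = (\<Sum>j\<in>A. d j * max 0 (t - q j))"
      by (intro sum.cong refl) (simp add: meas_Ioc_max)
    also have "(\<integral>z. c * indicator {0..t} z \<partial>lborel) = c * t" using True by simp
    finally show ?thesis .
  qed
  finally show ?thesis .
next
  case False
  have "(LBINT z=0..t. c + (\<Sum>j\<in>A. if q j < z then d j else 0)) = - (LBINT z=t..0. c + (\<Sum>j\<in>A. if q j < z then d j else 0))"
    by (rule interval_integral_endpoints_reverse)
  also have "(LBINT z=t..0. c + (\<Sum>j\<in>A. if q j < z then d j else 0)) = (LBINT z:{t..0}. c + (\<Sum>j\<in>A. if q j < z then d j else 0))"
    using interval_integral_Icc[of t 0] False by (simp add: zero_ereal_def)
  also have "\<dots> = (\<integral>z. c * indicator {t..0} z \<partial>lborel)"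
  proof -
    have pw: "indicator {t..0} z *\<^sub>R (c + (\<Sum>j\<in>A. if q j < z then d j else 0)) = c * indicator {t..0} z" for z
    proof (cases "z \<in> {t..0}")
      case True
      then have "\<And>j. j \<in> A \<Longrightarrow> \<not> q j < z" using q by force
      then show ?thesis using True by (simp add: indicator_def)
    next
      case False then show ?thesis by (simp add: indicator_def)
    qed
    show ?thesis unfolding set_lebesgue_integral_def pw by (rule refl)
  qed
  also have "\<dots> = - c * t" using False by simp
  finally show ?thesis
  proof -
    assume "(LBINT z=0..t. c + (\<Sum>j\<in>A. if q j < z then d j else 0)) = - (- c * t)"
    moreover have "\<And>j. j \<in> A \<Longrightarrow> max 0 (t - q j) = 0" using q False by force
    ultimately show ?thesis by simp
  qed
qed

lemma finite_bidset: "finite (bidset K)"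
proof -
  have "bidset K = (\<lambda>j. real j / real K) ` {..K}" unfolding bidset_def by auto
  then show ?thesis by simp
qed

lemma finite_bp: "finite (bid_profiles n K)"
proof -
  have "bid_profiles n K \<subseteq> (\<lambda>f l. if l < n then f l else 0) ` (PiE {..<n} (\<lambda>_. bidset K))"
  proof
    fix b assume b: "b \<in> bid_profiles n K"
    have "b = (\<lambda>l. if l < n then restrict b {..<n} l else 0)"
      using b by (auto simp: bid_profiles_def)
    moreover have "restrict b {..<n} \<in> PiE {..<n} (\<lambda>_. bidset K)" using b by (auto simp: bid_profiles_def)
    ultimately show "b \<in> (\<lambda>f l. if l < n then f l else 0) ` (PiE {..<n} (\<lambda>_. bidset K))" by blast
  qed
  moreover have "finite (PiE {..<n} (\<lambda>_. bidset K))" by (intro finite_PiE finite_bidset) auto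
  ultimately show ?thesis by (meson finite_imageI finite_subset)
qed

lemma fin_range_meas:
  fixes g :: "'a \<Rightarrow> 'b" and \<phi> :: "'b \<Rightarrow> real"
  assumes B: "finite B" and g: "\<And>\<omega>. \<omega> \<in> space M \<Longrightarrow> g \<omega> \<in> B"
    and S: "\<And>b. b \<in> B \<Longrightarrow> {\<omega>\<in>space M. g \<omega> = b} \<in> sets M"
  shows "(\<lambda>\<omega>. \<phi> (g \<omega>)) \<in> borel_measurable M"
proof -
  have m: "(\<lambda>\<omega>. \<Sum>b\<in>B. \<phi> b * indicator {\<omega>\<in>space M. g \<omega> = b} \<omega>) \<in> borel_measurable M"
    using S by (intro borel_measurable_sum borel_measurable_times borel_measurable_const borel_measurable_indicator) auto
  show ?thesis
  proof (rule measurable_cong[THEN iffD1, OF _ m])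
    fix \<omega> assume w: "\<omega> \<in> space M"
    have "(\<Sum>b\<in>B. \<phi> b * indicator {\<omega>\<in>space M. g \<omega> = b} \<omega>) = (\<Sum>b\<in>B. if b = g \<omega> then \<phi> b else 0)"
      using w by (intro sum.cong refl) (auto simp: indicator_def)
    also have "\<dots> = \<phi> (g \<omega>)" using g[OF w] B by (simp add: sum.delta')
    finally show "(\<Sum>b\<in>B. \<phi> b * indicator {\<omega>\<in>space M. g \<omega> = b} \<omega>) = \<phi> (g \<omega>)" .
  qed
qed

lemma int_step_D:
  assumes vd: "value_distribution M" and fin: "finite A"
  shows "(\<integral>y. (\<Sum>j\<in>A. if q j < y then c j else 0) \<partial>M) = (\<Sum>j\<in>A. c j * (1 - cdf M (q j)))"
proof -
  interpret real_distribution M using vd_real_distribution[OF vd] .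
  have eq: "(\<Sum>j\<in>A. if q j < y then c j else 0) = (\<Sum>j\<in>A. c j * indicator {q j<..} y)" for y
    by (intro sum.cong) (auto simp: indicator_def)
  have ii: "integrable M (\<lambda>y. c j * indicator {q j<..} y)" for j
    by (intro integrable_mult_right integrable_real_indicator) (auto simp: less_top[symmetric])
  have "(\<integral>y. (\<Sum>j\<in>A. if q j < y then c j else 0) \<partial>M) = (\<integral>y. (\<Sum>j\<in>A. c j * indicator {q j<..} y) \<partial>M)"
    unfolding eq ..
  also have "\<dots> = (\<Sum>j\<in>A. \<integral>y. c j * indicator {q j<..} y \<partial>M)"
    by (rule Bochner_Integration.integral_sum) (rule ii)
  also have "\<dots> = (\<Sum>j\<in>A. c j * (1 - cdf M (q j)))"
  proof (intro sum.cong refl)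
    fix j
    have "measure M {q j<..} = measure M (space M - {..q j})" by (simp add: Compl_eq_Diff_UNIV[symmetric] not_le)
    also have "\<dots> = 1 - measure M {..q j}" by (rule prob_compl) simp
    finally have "measure M {q j<..} = 1 - cdf M (q j)" by (simp add: cdf_def)
    then show "(\<integral>y. c j * indicator {q j<..} y \<partial>M) = c j * (1 - cdf M (q j))" by simp
  qed
  finally show ?thesis .
qed

theorem mainTheorem8:
  fixes n K :: nat
    and D :: "nat \<Rightarrow> real measure"
    and x p :: "nat \<Rightarrow> (nat \<Rightarrow> real) \<Rightarrow> real"
    and \<pi> :: "nat \<Rightarrow> nat \<Rightarrow> real"
  assumes K_pos: "0 < K"
    and D: "\<And>i. i < n \<Longrightarrow> value_distribution (D i)"
    and fmt: "auction_format n K x p"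
    and vp: "voluntary_participation n K p"
    and strat: "\<And>i. i < n \<Longrightarrow> prob_simplex K (\<pi> i)"
  defines "s \<equiv> (\<lambda>l. quantile_strategy K (D l) (\<pi> l))"
    and "e \<equiv> (\<lambda>k::nat. if k = 1 then 1 else (0::real))"
  shows "(\<Sum>i<n. \<integral>v. (\<Sum>k=1..K+1. grad K x p (D i) (\<pi> i) i (bid_profile_of n s v) k
                                     * (e k - \<pi> i k))
                  \<partial>(PiM ({..<n} - {i}) D))
         = (\<integral>v. (\<Sum>i<n. p i (bid_profile_of n s v)) \<partial>(PiM {..<n} D)) - aux_revenue n x s D"
proof -
  have sdef: "s = (\<lambda>l. quantile_strategy K (D l) (\<pi> l))" using assms(6) by simp
  have edef: "e = (\<lambda>k::nat. if k = 1 then 1 else (0::real))" using assms(7) by simp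
  define bp where "bp = bid_profile_of n s"
  have s_in: "\<And>l t. l < n \<Longrightarrow> s l t \<in> bidset K"
    unfolding sdef using qs_bidset D strat K_pos by blast
  have bidset0: "0 \<in> bidset K" unfolding bidset_def by force
  have bidsetj: "\<And>j. j \<le> K \<Longrightarrow> real j / real K \<in> bidset K" unfolding bidset_def by force
  have bpin: "\<And>v. bp v \<in> bid_profiles n K"
    using s_in by (auto simp: bp_def bid_profile_of_def bid_profiles_def)
  have bpi: "\<And>v i. i < n \<Longrightarrow> bp v i = s i (v i)" by (simp add: bp_def bid_profile_of_def)
  have bpupd: "\<And>v i y. i < n \<Longrightarrow> bp (v(i:=y)) = (bp v)(i := s i y)"
    by (auto simp: bp_def bid_profile_of_def)
  have updin: "\<And>b i t. b \<in> bid_profiles n K \<Longrightarrow> i < n \<Longrightarrow> t \<in> bidset K \<Longrightarrow> b(i:=t) \<in> bid_profiles n K"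
    by (auto simp: bid_profiles_def)
  have xb: "\<And>b i. b \<in> bid_profiles n K \<Longrightarrow> i < n \<Longrightarrow> 0 \<le> x i b \<and> x i b \<le> 1"
  proof -
    fix b i assume b: "b \<in> bid_profiles n K" and i: "i < n"
    have nn: "\<forall>j<n. 0 \<le> x j b" and s1: "(\<Sum>j<n. x j b) \<le> 1" using fmt b unfolding auction_format_def by auto
    have "x i b \<le> (\<Sum>j<n. x j b)" using i nn by (intro member_le_sum) auto
    then show "0 \<le> x i b \<and> x i b \<le> 1" using s1 nn i by auto
  qed
  have pb: "\<And>b i. b \<in> bid_profiles n K \<Longrightarrow> i < n \<Longrightarrow> 0 \<le> p i b \<and> p i b \<le> 1"
    using fmt unfolding auction_format_def by auto
  have vp0: "\<And>b i. b \<in> bid_profiles n K \<Longrightarrow> i < n \<Longrightarrow> p i (b(i:=0)) = 0"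
    using vp unfolding voluntary_participation_def by auto
  define q where "q = (\<lambda>i j. quantile (D i) (cum (\<pi> i) j))"
  have qb: "\<And>i j. i < n \<Longrightarrow> j \<le> K+1 \<Longrightarrow> 0 \<le> q i j \<and> q i j \<le> 1 \<and> cdf (D i) (q i j) = cum (\<pi> i) j"
    unfolding q_def using q_props D strat by blast
  define dP where "dP = (\<lambda>i b j. (if j = K+1 then p i (b(i:=0)) else p i (b(i:=real j/real K)))
      - (if j - 1 = K+1 then p i (b(i:=0)) else p i (b(i:=real (j-1)/real K))))"
  define dX where "dX = (\<lambda>i b j. (if j = K+1 then x i (b(i:=0)) else x i (b(i:=real j/real K)))
      - (if j - 1 = K+1 then x i (b(i:=0)) else x i (b(i:=real (j-1)/real K))))"
  define coef where "coef = (\<lambda>i b j. dP i b j - dX i b j * q i j)"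
  define G where "G = (\<lambda>i v. \<Sum>j=1..K+1. if q i j < v i then coef i (bp v) j else 0)"
  have coef_upd: "\<And>i b t j. coef i (b(i:=t)) j = coef i b j" by (simp add: coef_def dP_def dX_def)
  have coef_bound: "\<bar>coef i b j\<bar> \<le> 4" if b: "b \<in> bid_profiles n K" and i: "i < n" and j: "j \<in> {1..K+1}" for i b j
  proof -
    have hb: "0 \<le> p i (b(i:=t)) \<and> p i (b(i:=t)) \<le> 1 \<and> 0 \<le> x i (b(i:=t)) \<and> x i (b(i:=t)) \<le> 1" if t: "t \<in> bidset K" for t
      using pb[OF updin[OF b i t] i] xb[OF updin[OF b i t] i] by auto
    have h0: "0 \<le> p i (b(i:=0)) \<and> p i (b(i:=0)) \<le> 1 \<and> 0 \<le> x i (b(i:=0)) \<and> x i (b(i:=0)) \<le> 1"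
      using hb[OF bidset0] .
    have a1: "j \<noteq> K + 1 \<Longrightarrow> 0 \<le> p i (b(i:=real j/real K)) \<and> p i (b(i:=real j/real K)) \<le> 1 \<and> 0 \<le> x i (b(i:=real j/real K)) \<and> x i (b(i:=real j/real K)) \<le> 1"
      using hb[OF bidsetj[of j]] j by auto
    have a2: "j - 1 \<noteq> K + 1 \<Longrightarrow> 0 \<le> p i (b(i:=real (j-1)/real K)) \<and> p i (b(i:=real (j-1)/real K)) \<le> 1 \<and> 0 \<le> x i (b(i:=real (j-1)/real K)) \<and> x i (b(i:=real (j-1)/real K)) \<le> 1"
      using hb[OF bidsetj[of "j-1"]] j by auto
    have dPb: "\<bar>dP i b j\<bar> \<le> 1" unfolding dP_def using h0 a1 a2 by (auto split: if_splits)
    have dXb: "\<bar>dX i b j\<bar> \<le> 1" unfolding dX_def using h0 a1 a2 by (auto split: if_splits)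
    have qq: "\<bar>q i j\<bar> \<le> 1" using qb[OF i, of j] j by auto
    have "\<bar>dX i b j * q i j\<bar> \<le> 1" unfolding abs_mult using dXb qq by (simp add: mult_le_one)
    then show ?thesis unfolding coef_def using dPb by linarith
  qed
  have C: "p i (bp v) - aux_pay n x s i v = G i v" if i: "i < n" for i v
  proof -
    define b where "b = bp v"
    have sdi: "s i = quantile_strategy K (D i) (\<pi> i)" by (simp add: sdef)
    have bfix: "b(i := s i (v i)) = b" unfolding b_def using bpi[OF i, of v] by (metis fun_upd_triv)
    have P1: "p i (b(i := quantile_strategy K (D i) (\<pi> i) (v i))) = p i (b(i:=0)) + (\<Sum>j=1..K+1. if quantile (D i) (cum (\<pi> i) j) < v i then
     (if j = K + 1 then p i (b(i:=0)) else p i (b(i:=real j / real K))) - (if j - 1 = K + 1 then p i (b(i:=0)) else p i (b(i:=real (j - 1) / real K))) else 0)"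
      by (rule step_repr[OF D[OF i] strat[OF i] K_pos])
    have P2: "p i b = (\<Sum>j=1..K+1. if q i j < v i then dP i b j else 0)"
    proof -
      have "p i b = p i (b(i := quantile_strategy K (D i) (\<pi> i) (v i)))" using bfix sdi by simp
      also have "\<dots> = (\<Sum>j=1..K+1. if quantile (D i) (cum (\<pi> i) j) < v i then
     (if j = K + 1 then p i (b(i:=0)) else p i (b(i:=real j / real K))) - (if j - 1 = K + 1 then p i (b(i:=0)) else p i (b(i:=real (j - 1) / real K))) else 0)"
        unfolding P1 using vp0[OF bpin i, of v] unfolding b_def by simp
      also have "\<dots> = (\<Sum>j=1..K+1. if q i j < v i then dP i b j else 0)"
        unfolding q_def dP_def by (rule refl)
      finally show ?thesis .
    qed
    have X1: "x i (b(i := s i z)) = x i (b(i:=0)) + (\<Sum>j=1..K+1. if q i j < z then dX i b j else 0)" for z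
    proof -
      have "x i (b(i := quantile_strategy K (D i) (\<pi> i) z)) = x i (b(i:=0)) + (\<Sum>j=1..K+1. if quantile (D i) (cum (\<pi> i) j) < z then
       (if j = K + 1 then x i (b(i:=0)) else x i (b(i:=real j / real K))) - (if j - 1 = K + 1 then x i (b(i:=0)) else x i (b(i:=real (j - 1) / real K))) else 0)"
        by (rule step_repr[OF D[OF i] strat[OF i] K_pos])
      then show ?thesis unfolding sdi q_def dX_def by simp
    qed
    have A1: "aux_alloc n x s i (v(i:=z)) = x i (b(i:=0)) + (\<Sum>j=1..K+1. if q i j < z then dX i b j else 0)" for z
      using X1[of z] bpupd[OF i, of v z] unfolding aux_alloc_def bp_def b_def by simp
    have A0: "aux_alloc n x s i v = x i (b(i:=0)) + (\<Sum>j=1..K+1. if q i j < v i then dX i b j else 0)"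
      using A1[of "v i"] by simp
    have LB: "(LBINT z=0..v i. aux_alloc n x s i (v(i:=z))) = (LBINT z=0..v i. x i (b(i:=0)) + (\<Sum>j=1..K+1. if q i j < z then dX i b j else 0))"
      by (simp only: A1)
    also have "\<dots> = x i (b(i:=0)) * v i + (\<Sum>j=1..K+1. dX i b j * max 0 (v i - q i j))"
      by (rule lbint_step) (use qb[OF i] in auto)
    finally have LB2: "(LBINT z=0..v i. aux_alloc n x s i (v(i:=z))) = x i (b(i:=0)) * v i + (\<Sum>j=1..K+1. dX i b j * max 0 (v i - q i j))" .
    have AP: "aux_pay n x s i v = (\<Sum>j=1..K+1. if q i j < v i then dX i b j * q i j else 0)"
    proof -
      have "aux_pay n x s i v = (\<Sum>j=1..K+1. (if q i j < v i then dX i b j else 0) * v i - dX i b j * max 0 (v i - q i j))"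
        unfolding aux_pay_def A0 LB2 by (simp add: algebra_simps sum_subtractf sum_distrib_left sum_distrib_right)
      also have "\<dots> = (\<Sum>j=1..K+1. if q i j < v i then dX i b j * q i j else 0)"
        by (intro sum.cong refl) (auto simp: algebra_simps max_def)
      finally show ?thesis .
    qed
    show ?thesis unfolding G_def b_def[symmetric] P2 AP
      by (simp add: coef_def sum_subtractf[symmetric] if_distrib cong: if_cong)
  qed
  have Gupd: "G i (v(i:=y)) = (\<Sum>j=1..K+1. if q i j < y then coef i (bp v) j else 0)" if i: "i < n" for i v y
  proof -
    have cj: "\<And>j. coef i (bp (v(i:=y))) j = coef i (bp v) j" using bpupd[OF i] coef_upd by simp
    show ?thesis by (simp only: G_def cj fun_upd_same)
  qed
  define M where "M = PiM {..<n} D"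
  have probM: "prob_space M" unfolding M_def
    by (rule prob_space_PiM) (use D in \<open>auto simp: value_distribution_def\<close>)
  have meas_comp: "(\<lambda>v. v i) \<in> borel_measurable M" if i: "i < n" for i
  proof -
    have "(\<lambda>v. v i) \<in> measurable M (D i)" unfolding M_def by (rule measurable_component_singleton) (use i in simp)
    moreover have "sets (D i) = sets borel" using D[OF i] by (simp add: value_distribution_def)
    ultimately show ?thesis using measurable_cong_sets[of M M "D i" borel] by simp
  qed
  have meas_s: "(\<lambda>v. s l (v l)) \<in> borel_measurable M" if l: "l < n" for l
    using measurable_compose[OF meas_comp[OF l] qs_measurable] by (simp add: sdef)
  have meas_bp: "(\<lambda>v. \<phi> (bp v)) \<in> borel_measurable M" for \<phi> :: "(nat \<Rightarrow> real) \<Rightarrow> real"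
  proof (rule fin_range_meas[OF finite_bp, where g=bp and \<phi>=\<phi>])
    show "\<And>v. v \<in> space M \<Longrightarrow> bp v \<in> bid_profiles n K" using bpin by simp
    fix b assume b: "b \<in> bid_profiles n K"
    have "{v \<in> space M. bp v = b} = {v \<in> space M. \<forall>l\<in>{..<n}. s l (v l) = b l}"
    proof -
      have "bp v = b \<longleftrightarrow> (\<forall>l\<in>{..<n}. s l (v l) = b l)" for v
      proof
        assume "bp v = b" then show "\<forall>l\<in>{..<n}. s l (v l) = b l" using bpi by auto
      next
        assume a: "\<forall>l\<in>{..<n}. s l (v l) = b l"
        show "bp v = b"
        proof
          fix l show "bp v l = b l" using a b by (cases "l < n") (auto simp: bp_def bid_profile_of_def bid_profiles_def)
        qed
      qed
      then show ?thesis by auto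
    qed
    also have "\<dots> \<in> sets M"
    proof (rule sets.sets_Collect_finite_All)
      fix l assume "l \<in> {..<n}"
      then have l: "l < n" by simp
      have "(\<lambda>v. s l (v l)) -` {b l} \<inter> space M \<in> sets M" by (rule measurable_sets[OF meas_s[OF l]]) simp
      moreover have "(\<lambda>v. s l (v l)) -` {b l} \<inter> space M = {v \<in> space M. s l (v l) = b l}" by auto
      ultimately show "{v \<in> space M. s l (v l) = b l} \<in> sets M" by simp
    qed simp
    finally show "{v \<in> space M. bp v = b} \<in> sets M" .
  qed
  interpret PM: prob_space M by (rule probM)
  have intP: "integrable M (\<lambda>v. p i (bp v))" if i: "i < n" for i
  proof (rule PM.integrable_const_bound[where B=1])
    show "AE v in M. norm (p i (bp v)) \<le> 1" using pb[OF bpin i] by (intro AE_I2) auto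
  qed (rule meas_bp)
  have intG: "integrable M (G i)" if i: "i < n" for i
  proof (rule PM.integrable_const_bound[where B="(K+1)*4"])
    show "AE v in M. norm (G i v) \<le> (K+1)*4"
    proof (intro AE_I2)
      fix v
      have "\<bar>G i v\<bar> \<le> (\<Sum>j=1..K+1. \<bar>if q i j < v i then coef i (bp v) j else 0\<bar>)"
        unfolding G_def by (rule sum_abs)
      also have "\<dots> \<le> (\<Sum>j=1..K+1. (4::real))"
        using coef_bound[OF bpin i] by (intro sum_mono) auto
      finally show "norm (G i v) \<le> (K+1)*4" by simp
    qed
    show "G i \<in> borel_measurable M" unfolding G_def
    proof (intro borel_measurable_sum measurable_If)
      fix j
      show "(\<lambda>v. coef i (bp v) j) \<in> borel_measurable M" by (rule meas_bp)
      show "(\<lambda>v. 0) \<in> borel_measurable M" by simp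
      have "(\<lambda>v. v i) -` {q i j<..} \<inter> space M \<in> sets M" by (rule measurable_sets[OF meas_comp[OF i]]) simp
      moreover have "(\<lambda>v. v i) -` {q i j<..} \<inter> space M = {v \<in> space M. q i j < v i}" by auto
      ultimately show "{v \<in> space M. q i j < v i} \<in> sets M" by simp
    qed
  qed
  have RHS: "(\<integral>v. (\<Sum>i<n. p i (bid_profile_of n s v)) \<partial>(PiM {..<n} D)) - aux_revenue n x s D
     = (\<Sum>i<n. \<integral>v. G i v \<partial>M)"
  proof -
    have ar: "aux_revenue n x s D = (\<integral>v. (\<Sum>i<n. p i (bp v)) - (\<Sum>i<n. G i v) \<partial>M)"
      unfolding aux_revenue_def M_def[symmetric]
    proof (rule Bochner_Integration.integral_cong[OF refl])
      fix v
      have "aux_pay n x s i v = p i (bp v) - G i v" if "i \<in> {..<n}" for i using C[of i v] that by simp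
      then show "(\<Sum>i<n. aux_pay n x s i v) = (\<Sum>i<n. p i (bp v)) - (\<Sum>i<n. G i v)"
        by (simp add: sum_subtractf[symmetric])
    qed
    have i1: "integrable M (\<lambda>v. \<Sum>i<n. p i (bp v))" using intP by (intro Bochner_Integration.integrable_sum) auto
    have i2: "integrable M (\<lambda>v. \<Sum>i<n. G i v)" using intG by (intro Bochner_Integration.integrable_sum) auto
    have "(\<integral>v. (\<Sum>i<n. p i (bp v)) - (\<Sum>i<n. G i v) \<partial>M) = (\<integral>v. (\<Sum>i<n. p i (bp v)) \<partial>M) - (\<integral>v. (\<Sum>i<n. G i v) \<partial>M)"
      by (rule Bochner_Integration.integral_diff[OF i1 i2])
    moreover have "(\<integral>v. (\<Sum>i<n. G i v) \<partial>M) = (\<Sum>i<n. \<integral>v. G i v \<partial>M)"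
      by (rule Bochner_Integration.integral_sum) (use intG in auto)
    ultimately show ?thesis unfolding ar M_def[symmetric] bp_def by simp
  qed
  have inner: "(\<integral>y. G i (v(i:=y)) \<partial>D i)
     = (\<Sum>k=1..K+1. grad K x p (D i) (\<pi> i) i (bid_profile_of n s v) k * (e k - \<pi> i k))" if i: "i < n" for i v
  proof -
    have "(\<integral>y. G i (v(i:=y)) \<partial>D i) = (\<integral>y. (\<Sum>j=1..K+1. if q i j < y then coef i (bp v) j else 0) \<partial>D i)"
      unfolding Gupd[OF i] ..
    also have "\<dots> = (\<Sum>j=1..K+1. coef i (bp v) j * (1 - cdf (D i) (q i j)))"
      by (rule int_step_D[OF D[OF i]]) simp
    also have "\<dots> = (\<Sum>j=1..K+1. coef i (bp v) j * (1 - cum (\<pi> i) j))"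
      using qb[OF i] by (intro sum.cong refl) auto
    also have "\<dots> = (\<Sum>k=1..K+1. grad K x p (D i) (\<pi> i) i (bp v) k * (e k - \<pi> i k))"
    proof -
      have c1: "cum (\<pi> i) (K+1) = 1" by (rule cum_top[OF strat[OF i]])
      have p0: "p i ((bp v)(i:=0)) = 0" by (rule vp0[OF bpin i])
      show ?thesis unfolding grad_def edef coef_def dP_def dX_def q_def
        by (rule alg[symmetric, where hX="\<lambda>t. x i ((bp v)(i:=t))" and hP="\<lambda>t. p i ((bp v)(i:=t))", OF c1 p0])
    qed
    finally show ?thesis unfolding bp_def .
  qed
  define D' where "D' = (\<lambda>l. if l < n then D l else return borel (0::real))"
  have psf: "product_sigma_finite D'" unfolding product_sigma_finite_def
  proof
    fix l
    show "sigma_finite_measure (D' l)"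
    proof (cases "l < n")
      case True then show ?thesis using D[OF True] by (auto simp: D'_def value_distribution_def intro: prob_space_imp_sigma_finite)
    next
      case False then show ?thesis by (auto simp: D'_def intro!: prob_space_imp_sigma_finite prob_space_return)
    qed
  qed
  have prod: "(\<integral>v. G i v \<partial>M) = (\<integral>v. (\<integral>y. G i (v(i:=y)) \<partial>D i) \<partial>(PiM ({..<n} - {i}) D))" if i: "i < n" for i
  proof -
    have e1: "PiM (insert i ({..<n} - {i})) D' = M" unfolding M_def
      by (rule PiM_cong) (use i in \<open>auto simp: D'_def\<close>)
    have e2: "PiM ({..<n} - {i}) D' = PiM ({..<n} - {i}) D"
      by (rule PiM_cong) (auto simp: D'_def)
    have e3: "D' i = D i" using i by (simp add: D'_def)
    have "integral\<^sup>L (PiM (insert i ({..<n} - {i})) D') (G i) = (\<integral>v. (\<integral>y. G i (v(i:=y)) \<partial>D' i) \<partial>PiM ({..<n} - {i}) D')"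
      by (rule product_sigma_finite.product_integral_insert[OF psf]) (use intG[OF i] e1 in auto)
    then show ?thesis unfolding e1 e2 e3 .
  qed
  show ?thesis unfolding RHS using prod inner by simp
qed

end
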